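(* Let $X,Y,P$ be Banach spaces, $F:X\times P\rightrightarrows Y$ and $G:X\rightrightarrows Y$ set-valued maps and $(\overline{x},\overline{p},\overline{y})\in X\times P\times Y$ with $\overline{y}\in F(\overline{x},\overline{p})$ and $-\overline{y}\in G(\overline{x})$. Let $S:P\rightrightarrows X$, $S(p)=\{x\in X: 0\in F(x,p)+G(x)\}$. Suppose: (i) $(F,G)$ is locally sum-stable around $(\overline{x},\overline{p},\overline{y},-\overline{y})$; (ii) $F(x,\cdot)$ is inner semicontinuous at $(\overline{p},\overline{y})$ for every $x$ in a neighborhood of $\overline{x}$; (iii) $F$ is Lipschitz-like with respect to $x$ uniformly in $p$ around $((\overline{x},\overline{p}),\overline{y})$; (iv) $F$ is metrically regular with respect to $p$ uniformly in $x$ around $((\overline{x},\overline{p}),\overline{y})$; (v) $G$ is Lipschitz-like around $(\overline{x},-\overline{y})$. Then $S$ is metrically regular around $(\overline{p},\overline{x})$ and \[ \operatorname{reg}S(\overline{p},\overline{x})\le\widehat{\operatorname{reg}}_pF((\overline{x},\overline{p}),\overline{y})\cdot\big[\widehat{\operatorname{lip}}_xF((\overline{x},\overline{p}),\overline{y})+\operatorname{lip}G(\overline{x},-\overline{y})\big]. \]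
   Context: $B$ open balls, $\mathbb{D}_Y$ closed unit ball, $d(x,A)=\inf_{a\in A}\|x-a\|$, $d(x,\emptyset)=\infty$; products carry the sum norm. Write $F_p=F(\cdot,p)$, $F_x=F(x,\cdot)$. $(F,G)$ is locally sum-stable around $(\overline{x},\overline{p},\overline{y},\overline{z})$ (where $\overline{y}\in F(\overline{x},\overline{p})$, $\overline{z}\in G(\overline{x})$) if for every $\varepsilon>0$ there is $\delta>0$ such that for every $(x,p)\in B(\overline{x},\delta)\times B(\overline{p},\delta)$ and every $w\in(F_p+G)(x)\cap B(\overline{y}+\overline{z},\delta)$ there exist $y\in F_p(x)\cap B(\overline{y},\varepsilon)$ and $z\in G(x)\cap B(\overline{z},\varepsilon)$ with $w=y+z$. A multifunction $T$ is inner semicontinuous at $(a,b)\in\operatorname{Gr}T$ if for every open $D\ni b$ there is a neighborhood $U$ of $a$ with $T(a')\cap D\neq\emptyset$ for all $a'\in U$. $F$ is Lipschitz-like with respect to $x$ uniformly in $p$ around $((\overline{x},\overline{p}),\overline{y})$ with constant $L$ if there are neighborhoods $U$ of $\overline{x}$, $V$ of $\overline{p}$, $W$ of $\overline{y}$ such that $F_p(x)\cap W\subset F_p(u)+L\|x-u\|\mathbb{D}_Y$ for all $x,u\in U$, $p\in V$; $\widehat{\operatorname{lip}}_xF((\overline{x},\overline{p}),\overline{y})$ is the infimum of such $L$. $F$ is metrically regular with respect to $p$ uniformly in $x$ around $((\overline{x},\overline{p}),\overline{y})$ with constant $L$ if there are such neighborhoods with $d(p,F_x^{-1}(y))\le L\,d(y,F_x(p))$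 for all $(x,p,y)\in U\times V\times W$; $\widehat{\operatorname{reg}}_pF((\overline{x},\overline{p}),\overline{y})$ is the infimum of such $L$. $T:A\rightrightarrows B$ is Lipschitz-like around $(\overline{a},\overline{b})$ with constant $L$ if there are neighborhoods $U$ of $\overline{a}$, $V$ of $\overline{b}$ with $T(a)\cap V\subset T(u)+L\|a-u\|\mathbb{D}_B$ for all $a,u\in U$ ($\operatorname{lip}T(\overline{a},\overline{b})$ the infimum of such $L$); $T$ is metrically regular around $(\overline{a},\overline{b})$ with constant $L$ if there are neighborhoods $U,V$ with $d(a,T^{-1}(b))\le L\,d(b,T(a))$ for all $(a,b)\in U\times V$ ($\operatorname{reg}T(\overline{a},\overline{b})$ the infimum of such $L$). *)

theory Defs
  imports "HOL-Analysis.Analysis"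
begin

definition setdist_e :: "'a::metric_space \<Rightarrow> 'a set \<Rightarrow> ereal" where
  "setdist_e x A = (if A = {} then \<infinity> else ereal (infdist x A))"

definition locally_sum_stable ::
  "('x::real_normed_vector \<Rightarrow> 'p::real_normed_vector \<Rightarrow> 'y::real_normed_vector set)
   \<Rightarrow> ('x \<Rightarrow> 'y set) \<Rightarrow> 'x \<Rightarrow> 'p \<Rightarrow> 'y \<Rightarrow> 'y \<Rightarrow> bool" where
  "locally_sum_stable F G xb pb yb zb \<longleftrightarrow>
     (\<forall>\<epsilon>>0. \<exists>\<delta>>0. \<forall>x\<in>ball xb \<delta>. \<forall>p\<in>ball pb \<delta>.
        \<forall>w \<in> {y + z | y z. y \<in> F x p \<and> z \<in> G x} \<inter> ball (yb + zb) \<delta>.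
          \<exists>y\<in>F x p \<inter> ball yb \<epsilon>. \<exists>z\<in>G x \<inter> ball zb \<epsilon>. w = y + z)"

definition inner_semicontinuous :: "('a::topological_space \<Rightarrow> 'b::topological_space set) \<Rightarrow> 'a \<Rightarrow> 'b \<Rightarrow> bool" where
  "inner_semicontinuous T a b \<longleftrightarrow>
     (\<forall>D. open D \<and> b \<in> D \<longrightarrow> (\<exists>U. open U \<and> a \<in> U \<and> (\<forall>a'\<in>U. T a' \<inter> D \<noteq> {})))"

definition lipschitz_like_x ::
  "('x::real_normed_vector \<Rightarrow> 'p::real_normed_vector \<Rightarrow> 'y::real_normed_vector set)
   \<Rightarrow> 'x \<Rightarrow> 'p \<Rightarrow> 'y \<Rightarrow> real \<Rightarrow> bool" where
  "lipschitz_like_x F xb pb yb L \<longleftrightarrow> 0 \<le> L \<and>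
     (\<exists>U V W. open U \<and> xb \<in> U \<and> open V \<and> pb \<in> V \<and> open W \<and> yb \<in> W \<and>
        (\<forall>x\<in>U. \<forall>u\<in>U. \<forall>p\<in>V. \<forall>y \<in> F x p \<inter> W. \<exists>v \<in> F u p. norm (y - v) \<le> L * norm (x - u)))"

definition lip_hat_x ::
  "('x::real_normed_vector \<Rightarrow> 'p::real_normed_vector \<Rightarrow> 'y::real_normed_vector set)
   \<Rightarrow> 'x \<Rightarrow> 'p \<Rightarrow> 'y \<Rightarrow> real" where
  "lip_hat_x F xb pb yb = Inf {L. lipschitz_like_x F xb pb yb L}"

definition metric_regular_p ::
  "('x::real_normed_vector \<Rightarrow> 'p::real_normed_vector \<Rightarrow> 'y::real_normed_vector set)
   \<Rightarrow> 'x \<Rightarrow> 'p \<Rightarrow> 'y \<Rightarrow> real \<Rightarrow> bool" where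
  "metric_regular_p F xb pb yb L \<longleftrightarrow> 0 < L \<and>
     (\<exists>U V W. open U \<and> xb \<in> U \<and> open V \<and> pb \<in> V \<and> open W \<and> yb \<in> W \<and>
        (\<forall>x\<in>U. \<forall>p\<in>V. \<forall>y\<in>W.
           setdist_e p {q. y \<in> F x q} \<le> ereal L * setdist_e y (F x p)))"

definition reg_hat_p ::
  "('x::real_normed_vector \<Rightarrow> 'p::real_normed_vector \<Rightarrow> 'y::real_normed_vector set)
   \<Rightarrow> 'x \<Rightarrow> 'p \<Rightarrow> 'y \<Rightarrow> real" where
  "reg_hat_p F xb pb yb = Inf {L. metric_regular_p F xb pb yb L}"

definition lipschitz_like ::
  "('a::real_normed_vector \<Rightarrow> 'b::real_normed_vector set) \<Rightarrow> 'a \<Rightarrow> 'b \<Rightarrow> real \<Rightarrow> bool" where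
  "lipschitz_like T ab bb L \<longleftrightarrow> 0 \<le> L \<and>
     (\<exists>U V. open U \<and> ab \<in> U \<and> open V \<and> bb \<in> V \<and>
        (\<forall>a\<in>U. \<forall>u\<in>U. \<forall>b \<in> T a \<inter> V. \<exists>v \<in> T u. norm (b - v) \<le> L * norm (a - u)))"

definition lip :: "('a::real_normed_vector \<Rightarrow> 'b::real_normed_vector set) \<Rightarrow> 'a \<Rightarrow> 'b \<Rightarrow> real" where
  "lip T ab bb = Inf {L. lipschitz_like T ab bb L}"

definition metric_regular ::
  "('a::real_normed_vector \<Rightarrow> 'b::real_normed_vector set) \<Rightarrow> 'a \<Rightarrow> 'b \<Rightarrow> real \<Rightarrow> bool" where
  "metric_regular T ab bb L \<longleftrightarrow> 0 < L \<and>
     (\<exists>U V. open U \<and> ab \<in> U \<and> open V \<and> bb \<in> V \<and>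
        (\<forall>a\<in>U. \<forall>b\<in>V. setdist_e a {a'. b \<in> T a'} \<le> ereal L * setdist_e b (T a)))"

definition reg :: "('a::real_normed_vector \<Rightarrow> 'b::real_normed_vector set) \<Rightarrow> 'a \<Rightarrow> 'b \<Rightarrow> real" where
  "reg T ab bb = Inf {L. metric_regular T ab bb L}"

end

theory Submission imports Defs begin

lemma infdist_approx:
  assumes "A \<noteq> {}" "0 < \<eta>"
  shows "\<exists>a\<in>A. dist x a < infdist x A + \<eta>"
proof -
  have "(INF a\<in>A. dist x a) < infdist x A + \<eta>" using assms infdist_notempty[of A x] by simp
  moreover have "bdd_below ((\<lambda>a. dist x a) ` A)" by (rule bdd_belowI[of _ 0]) auto
  ultimately show ?thesis using assms(1) by (simp add: cINF_less_iff)
qed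

lemma core:
  fixes F :: "'x::real_normed_vector \<Rightarrow> 'p::real_normed_vector \<Rightarrow> 'y::real_normed_vector set"
  assumes mr: "metric_regular_p F xb pb yb r" and ll: "lipschitz_like_x F xb pb yb l1"
    and lg: "lipschitz_like G xb (-yb) l2" and ss: "locally_sum_stable F G xb pb yb (-yb)"
  shows "\<exists>\<rho>>0. \<exists>\<beta>>0. \<forall>x\<in>ball xb \<rho>. \<forall>p\<in>ball pb \<beta>. \<forall>x'\<in>ball xb \<rho>.
     (\<exists>y z. y\<in>F x' p \<and> z\<in>G x' \<and> y+z=0) \<longrightarrow>
     ({q. \<exists>y z. y\<in>F x q \<and> z\<in>G x \<and> y+z=0} \<noteq> {} \<and>
      infdist p {q. \<exists>y z. y\<in>F x q \<and> z\<in>G x \<and> y+z=0} \<le> r*(l1+l2)*norm(x-x'))"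
proof -
  from mr obtain U1 V1 W1 where r0: "0<r" and U1: "open U1" "xb\<in>U1" and V1: "open V1" "pb \<in> V1"
    and W1: "open W1" "yb\<in>W1"
    and MR: "\<forall>x\<in>U1. \<forall>p\<in>V1. \<forall>y\<in>W1. setdist_e p {q. y \<in> F x q} \<le> ereal r * setdist_e y (F x p)"
    unfolding metric_regular_p_def by blast
  from ll obtain U2 V2 W2 where l10: "0 \<le> l1" and U2: "open U2" "xb\<in>U2" and V2: "open V2" "pb \<in> V2"
    and W2: "open W2" "yb\<in>W2"
    and LL: "\<forall>x\<in>U2. \<forall>u\<in>U2. \<forall>p\<in>V2. \<forall>y \<in> F x p \<inter> W2. \<exists>v \<in> F u p. norm (y - v) \<le> l1 * norm (x - u)"
    unfolding lipschitz_like_x_def by blast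
  from lg obtain U3 V3 where l20: "0 \<le> l2" and U3: "open U3" "xb\<in>U3" and V3: "open V3" "-yb \<in> V3"
    and LG: "\<forall>a\<in>U3. \<forall>u\<in>U3. \<forall>b \<in> G a \<inter> V3. \<exists>v \<in> G u. norm (b - v) \<le> l2 * norm (a - u)"
    unfolding lipschitz_like_def by blast
  obtain eu1 where eu1: "eu1>0" "ball xb eu1 \<subseteq> U1" using U1 open_contains_ball by blast
  obtain eu2 where eu2: "eu2>0" "ball xb eu2 \<subseteq> U2" using U2 open_contains_ball by blast
  obtain eu3 where eu3: "eu3>0" "ball xb eu3 \<subseteq> U3" using U3 open_contains_ball by blast
  obtain ev1 where ev1: "ev1>0" "ball pb ev1 \<subseteq> V1" using V1 open_contains_ball by blast
  obtain ev2 where ev2: "ev2>0" "ball pb ev2 \<subseteq> V2" using V2 open_contains_ball by blast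
  obtain ew1 where ew1: "ew1>0" "ball yb ew1 \<subseteq> W1" using W1 open_contains_ball by blast
  obtain ew2 where ew2: "ew2>0" "ball yb ew2 \<subseteq> W2" using W2 open_contains_ball by blast
  obtain ew3 where ew3: "ew3>0" "ball (-yb) ew3 \<subseteq> V3" using V3 open_contains_ball by blast
  define \<omega> where "\<omega> = min ew1 (min ew2 ew3)"
  have \<omega>0: "\<omega> > 0" using ew1 ew2 ew3 by (simp add: \<omega>_def)
  from ss obtain \<delta> where \<delta>0: "\<delta>>0" and SS: "\<forall>x\<in>ball xb \<delta>. \<forall>p\<in>ball pb \<delta>.
        \<forall>w \<in> {y + z | y z. y \<in> F x p \<and> z \<in> G x} \<inter> ball (yb + - yb) \<delta>.
          \<exists>y\<in>F x p \<inter> ball yb (\<omega>/2). \<exists>z\<in>G x \<inter> ball (-yb) (\<omega>/2). w = y + z"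
    using ss[unfolded locally_sum_stable_def, rule_format, of "\<omega>/2"] \<omega>0 by auto
  define \<rho> where "\<rho> = min (min eu1 (min eu2 eu3)) (min \<delta> (\<omega>/(8*(l2+1))))"
  define \<beta> where "\<beta> = min (min ev1 ev2) \<delta>"
  have \<rho>0: "\<rho> > 0" using eu1 eu2 eu3 \<delta>0 \<omega>0 l20 by (simp add: \<rho>_def)
  have \<beta>0: "\<beta> > 0" using ev1 ev2 \<delta>0 by (simp add: \<beta>_def)
  have \<rho>l2: "2*\<rho>*l2 \<le> \<omega>/4"
  proof -
    have "\<rho> \<le> \<omega>/(8*(l2+1))" by (simp add: \<rho>_def)
    hence "\<rho>*(8*(l2+1)) \<le> \<omega>" using l20 by (simp add: pos_le_divide_eq)
    moreover have "8*\<rho>*l2 \<le> \<rho>*(8*(l2+1))" using \<rho>0 by (simp add: algebra_simps)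
    ultimately show ?thesis by linarith
  qed
  show ?thesis
  proof (rule exI[of _ \<rho>], rule conjI[OF \<rho>0], rule exI[of _ \<beta>], rule conjI[OF \<beta>0], intro ballI impI)
    fix x p x'
    assume x: "x \<in> ball xb \<rho>" and p: "p \<in> ball pb \<beta>" and x': "x' \<in> ball xb \<rho>"
      and "\<exists>y z. y\<in>F x' p \<and> z\<in>G x' \<and> y+z=0"
    then obtain y0 z0 where y0: "y0 \<in> F x' p" and z0: "z0 \<in> G x'" and s0: "y0 + z0 = 0" by blast
    have x'd: "x' \<in> ball xb \<delta>" using x' by (auto simp: \<rho>_def)
    have pd: "p \<in> ball pb \<delta>" using p by (auto simp: \<beta>_def)
    have "0 \<in> {y + z | y z. y \<in> F x' p \<and> z \<in> G x'} \<inter> ball (yb + - yb) \<delta>"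
      using y0 z0 s0 \<delta>0 by auto
    hence "\<exists>y\<in>F x' p \<inter> ball yb (\<omega>/2). \<exists>z\<in>G x' \<inter> ball (-yb) (\<omega>/2). 0 = y + z"
      by (rule bspec[OF bspec[OF bspec[OF SS x'd] pd]])
    then obtain y1 z1 where y1: "y1 \<in> F x' p" "y1 \<in> ball yb (\<omega>/2)" and z1: "z1 \<in> G x'" "z1 \<in> ball (-yb) (\<omega>/2)"
      and s1: "0 = y1 + z1" by blast
    have xU: "x \<in> U1" "x \<in> U2" "x \<in> U3" "x' \<in> U1" "x' \<in> U2" "x' \<in> U3"
      using x x' eu1 eu2 eu3 by (auto simp: \<rho>_def)
    have pV: "p \<in> V1" "p \<in> V2" using p ev1 ev2 by (auto simp: \<beta>_def)
    have y1W: "y1 \<in> W2" using y1 ew2 by (auto simp: \<omega>_def dist_commute)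
    have z1V: "z1 \<in> V3" using z1 ew3 by (auto simp: \<omega>_def dist_commute)
    obtain z where z: "z \<in> G x" and zz: "norm (z1 - z) \<le> l2 * norm (x' - x)"
      using LG xU z1 z1V by blast
    obtain v where v: "v \<in> F x p" and vv: "norm (y1 - v) \<le> l1 * norm (x' - x)"
      using LL xU pV y1 y1W by blast
    have nxx: "norm (x' - x) < 2*\<rho>"
    proof -
      have "norm (x' - x) \<le> norm (x' - xb) + norm (xb - x)" by (metis norm_diff_triangle_ineq diff_add_cancel add_diff_eq norm_triangle_ineq diff_add_eq)
      thus ?thesis using x x' by (simp add: dist_norm norm_minus_commute)
    qed
    have "norm (-z - yb) \<le> norm (z1 - z) + norm (y1 - yb)"
    proof -
      have "-z - yb = (z1 - z) + (y1 - yb)" using s1 by (simp add: algebra_simps eq_neg_iff_add_eq_0)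
      thus ?thesis by (metis norm_triangle_ineq)
    qed
    also have "\<dots> < l2 * (2*\<rho>) + \<omega>/2"
    proof -
      have "l2 * norm (x' - x) \<le> l2 * (2*\<rho>)" using nxx l20 by (simp add: mult_left_mono)
      moreover have "norm (y1 - yb) < \<omega>/2" using y1 by (simp add: dist_norm norm_minus_commute)
      ultimately show ?thesis using zz by linarith
    qed
    also have "\<dots> \<le> \<omega>" using \<rho>l2 \<omega>0 by (simp add: algebra_simps)
    finally have "-z \<in> W1" using ew1 by (auto simp: \<omega>_def dist_norm norm_minus_commute)
    hence M: "setdist_e p {q. -z \<in> F x q} \<le> ereal r * setdist_e (-z) (F x p)"
      using MR xU pV by blast
    have ne: "F x p \<noteq> {}" using v by blast
    have dle: "infdist (-z) (F x p) \<le> (l1+l2) * norm (x - x')"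
    proof -
      have "infdist (-z) (F x p) \<le> dist (-z) v" using v by (rule infdist_le)
      also have "\<dots> = norm ((z1 - z) + (y1 - v))"
      proof -
        have "(z1 - z) + (y1 - v) = (y1 + z1) + (-z - v)" by (simp add: algebra_simps)
        hence "(z1 - z) + (y1 - v) = -z - v" using s1 by (metis add.left_neutral)
        thus ?thesis unfolding dist_norm by (rule arg_cong[of _ _ norm, OF sym])
      qed
      also have "\<dots> \<le> norm (z1 - z) + norm (y1 - v)" by (rule norm_triangle_ineq)
      also have "\<dots> \<le> (l1+l2) * norm (x - x')" using zz vv by (simp add: algebra_simps norm_minus_commute)
      finally show ?thesis .
    qed
    define A where "A = {q. -z \<in> F x q}"
    have M2: "setdist_e p A \<le> ereal (r * infdist (-z) (F x p))"
      using M ne by (simp add: setdist_e_def A_def)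
    have Ane: "A \<noteq> {}" using M2 by (auto simp: setdist_e_def)
    have Ale: "infdist p A \<le> r * infdist (-z) (F x p)" using M2 Ane by (simp add: setdist_e_def)
    have sub: "A \<subseteq> {q. \<exists>y z. y\<in>F x q \<and> z\<in>G x \<and> y+z=0}" using z by (auto simp: A_def)
    have ne2: "{q. \<exists>y z. y\<in>F x q \<and> z\<in>G x \<and> y+z=0} \<noteq> {}" using sub Ane by blast
    have "infdist p {q. \<exists>y z. y\<in>F x q \<and> z\<in>G x \<and> y+z=0} \<le> infdist p A"
      by (rule infdist_mono[OF sub Ane])
    also have "\<dots> \<le> r * infdist (-z) (F x p)" by (rule Ale)
    also have "\<dots> \<le> r * ((l1+l2) * norm (x - x'))" using dle r0 by (simp add: mult_left_mono)
    finally have "infdist p {q. \<exists>y z. y\<in>F x q \<and> z\<in>G x \<and> y+z=0} \<le> r*(l1+l2)*norm(x-x')"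
      by (simp add: mult.assoc)
    with ne2 show "{q. \<exists>y z. y\<in>F x q \<and> z\<in>G x \<and> y+z=0} \<noteq> {} \<and>
      infdist p {q. \<exists>y z. y\<in>F x q \<and> z\<in>G x \<and> y+z=0} \<le> r*(l1+l2)*norm(x-x')" by blast
  qed
qed

lemma main:
  fixes F :: "'x::real_normed_vector \<Rightarrow> 'p::real_normed_vector \<Rightarrow> 'y::real_normed_vector set"
  assumes mr: "metric_regular_p F xb pb yb r" and ll: "lipschitz_like_x F xb pb yb l1"
    and lg: "lipschitz_like G xb (-yb) l2" and ss: "locally_sum_stable F G xb pb yb (-yb)"
    and y0: "yb \<in> F xb pb" and z0: "- yb \<in> G xb" and L: "r*(l1+l2) < L"
  shows "metric_regular (\<lambda>p. {x. 0 \<in> {y + z | y z. y \<in> F x p \<and> z \<in> G x}}) pb xb L"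
proof -
  define S where "S = (\<lambda>p. {x. 0 \<in> {y + z | y z. y \<in> F x p \<and> z \<in> G x}})"
  define Si where "Si = (\<lambda>x. {q. \<exists>y z. y\<in>F x q \<and> z\<in>G x \<and> y+z=0})"
  define c where "c = r*(l1+l2)"
  have c0: "0 \<le> c" using mr ll lg by (auto simp: c_def metric_regular_p_def lipschitz_like_x_def lipschitz_like_def)
  have L0: "0 < L" using c0 L by (simp add: c_def)
  have Sinv: "{a'. x \<in> S a'} = Si x" for x by (auto simp: S_def Si_def eq_neg_iff_add_eq_0)
  have Smem: "x \<in> S p \<longleftrightarrow> (\<exists>y z. y\<in>F x p \<and> z\<in>G x \<and> y+z=0)" for x p by (auto simp: S_def)
  from core[OF mr ll lg ss] obtain \<rho> \<beta> where \<rho>0: "\<rho>>0" and \<beta>0: "\<beta>>0" and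
    C: "\<forall>x\<in>ball xb \<rho>. \<forall>p\<in>ball pb \<beta>. \<forall>x'\<in>ball xb \<rho>.
     (\<exists>y z. y\<in>F x' p \<and> z\<in>G x' \<and> y+z=0) \<longrightarrow>
     (Si x \<noteq> {} \<and> infdist p (Si x) \<le> c*norm(x-x'))"
    unfolding Si_def c_def by blast
  define \<sigma> where "\<sigma> = \<rho>/2"
  define \<alpha> where "\<alpha> = min (\<rho>/2) (L*\<sigma>/(2*(c+1)))"
  define \<beta>' where "\<beta>' = min \<beta> (L*\<sigma>/2)"
  have \<sigma>0: "\<sigma> > 0" using \<rho>0 by (simp add: \<sigma>_def)
  have \<alpha>0: "\<alpha> > 0" using \<rho>0 \<sigma>0 L0 c0 by (simp add: \<alpha>_def)
  have \<beta>'0: "\<beta>' > 0" using \<beta>0 \<sigma>0 L0 by (simp add: \<beta>'_def)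
  have c\<alpha>: "c*\<alpha> \<le> L*\<sigma>/2"
  proof -
    have "\<alpha> \<le> L*\<sigma>/(2*(c+1))" by (simp add: \<alpha>_def)
    hence "\<alpha>*(2*(c+1)) \<le> L*\<sigma>" using c0 by (simp add: pos_le_divide_eq)
    moreover have "2*(c*\<alpha>) \<le> \<alpha>*(2*(c+1))" using \<alpha>0 by (simp add: algebra_simps)
    ultimately show ?thesis by linarith
  qed
  have KEY: "setdist_e p (Si x) \<le> ereal L * setdist_e x (S p)" if p: "p \<in> ball pb \<beta>'" and x: "x \<in> ball xb \<alpha>" for p x
  proof -
    have x\<rho>: "x \<in> ball xb \<rho>" using x \<alpha>0 \<rho>0 by (auto simp: \<alpha>_def)
    have p\<beta>: "p \<in> ball pb \<beta>" using p by (auto simp: \<beta>'_def)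
    have pbb: "pb \<in> ball pb \<beta>" and xbb: "xb \<in> ball xb \<rho>" using \<beta>0 \<rho>0 by simp_all
    have "(\<exists>y z. y\<in>F xb pb \<and> z\<in>G xb \<and> y+z=0)" using y0 z0 by (intro exI[of _ yb] exI[of _ "-yb"]) simp
    hence c1: "Si x \<noteq> {} \<and> infdist pb (Si x) \<le> c*norm(x-xb)"
      using mp[OF bspec[OF bspec[OF bspec[OF C x\<rho>] pbb] xbb]] by blast
    hence Sine: "Si x \<noteq> {}" by simp
    have "norm (x - xb) < \<alpha>" using x by (simp add: dist_norm norm_minus_commute)
    hence "c*norm(x-xb) \<le> c*\<alpha>" using c0 by (simp add: mult_left_mono)
    hence D1: "infdist pb (Si x) \<le> L*\<sigma>/2" using c1 c\<alpha> by linarith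
    have "infdist p (Si x) \<le> infdist pb (Si x) + dist p pb" by (rule infdist_triangle)
    moreover have "dist p pb < L*\<sigma>/2" using p by (simp add: \<beta>'_def dist_commute)
    ultimately have Dbound: "infdist p (Si x) \<le> L*\<sigma>" using D1 by linarith
    show ?thesis
    proof (cases "S p = {}")
      case True
      then show ?thesis using L0 by (simp add: setdist_e_def)
    next
      case False
      define d where "d = infdist x (S p)"
      have d0: "0 \<le> d" by (simp add: d_def infdist_nonneg)
      have "infdist p (Si x) \<le> L * d"
      proof (cases "\<sigma> \<le> d")
        case True
        then show ?thesis using Dbound L0 by (smt (verit) mult_left_mono)
      next
        case False
        have "infdist p (Si x) \<le> c*d + e" if e: "e > 0" for e
        proof -
          define \<eta> where "\<eta> = min (e/(c+1)) ((\<sigma>-d)/2)"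
          have \<eta>0: "\<eta> > 0" using e c0 False by (simp add: \<eta>_def)
          obtain x' where x': "x' \<in> S p" and dx': "dist x x' < d + \<eta>"
            using infdist_approx[OF \<open>S p \<noteq> {}\<close> \<eta>0] by (auto simp: d_def)
          have "\<eta> \<le> (\<sigma>-d)/2" unfolding \<eta>_def by (rule min.cobounded2)
          hence "2*\<eta> \<le> \<sigma> - d" by simp
          hence "d + \<eta> \<le> \<sigma>" using False \<eta>0 by linarith
          have "norm (x' - xb) \<le> norm (x' - x) + norm (x - xb)"
            by (metis norm_diff_triangle_ineq diff_add_cancel add_diff_eq norm_triangle_ineq diff_add_eq)
          moreover have "norm (x' - x) < \<sigma>" using dx' \<open>d + \<eta> \<le> \<sigma>\<close> by (simp add: dist_norm norm_minus_commute)
          moreover have "norm (x - xb) < \<rho>/2" using x by (simp add: dist_norm norm_minus_commute \<alpha>_def)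
          ultimately have "norm (x' - xb) < \<rho>" by (simp add: \<sigma>_def)
          hence x'\<rho>: "x' \<in> ball xb \<rho>" by (simp add: dist_norm norm_minus_commute)
          have "infdist p (Si x) \<le> c*norm(x-x')"
            using mp[OF bspec[OF bspec[OF bspec[OF C x\<rho>] p\<beta>] x'\<rho>]] x' Smem by blast
          also have "\<dots> \<le> c*(d+\<eta>)" using dx' c0 by (simp add: dist_norm mult_left_mono)
          also have "\<dots> \<le> c*d + e"
          proof -
            have "\<eta> \<le> e/(c+1)" unfolding \<eta>_def by (rule min.cobounded1)
            hence "\<eta>*(c+1) \<le> e" using c0 by (simp add: pos_le_divide_eq)
            moreover have "c*\<eta> \<le> \<eta>*(c+1)" using \<eta>0 by (simp add: algebra_simps)
            ultimately show ?thesis by (simp add: algebra_simps)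
          qed
          finally show ?thesis .
        qed
        hence "infdist p (Si x) \<le> c*d" by (rule field_le_epsilon)
        also have "\<dots> \<le> L*d" using L d0 by (simp add: c_def mult_right_mono)
        finally show ?thesis .
      qed
      then show ?thesis using False Sine by (simp add: setdist_e_def d_def)
    qed
  qed
  have K2: "\<forall>a\<in>ball pb \<beta>'. \<forall>b\<in>ball xb \<alpha>. setdist_e a {a'. b \<in> S a'} \<le> ereal L * setdist_e b (S a)"
    using KEY Sinv by simp
  have "\<exists>U V. open U \<and> pb \<in> U \<and> open V \<and> xb \<in> V \<and>
        (\<forall>a\<in>U. \<forall>b\<in>V. setdist_e a {a'. b \<in> S a'} \<le> ereal L * setdist_e b (S a))"
    using K2 \<beta>'0 \<alpha>0 by (intro exI[of _ "ball pb \<beta>'"] exI[of _ "ball xb \<alpha>"]) simp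
  thus ?thesis using L0 unfolding metric_regular_def S_def by blast
qed

lemma setdist_e_nonneg: "0 \<le> setdist_e x A"
  by (simp add: setdist_e_def infdist_nonneg)

lemma mrp_mono: "metric_regular_p F xb pb yb r \<Longrightarrow> r \<le> r' \<Longrightarrow> metric_regular_p F xb pb yb r'"
  unfolding metric_regular_p_def
  by (smt (verit) ereal_less_eq(3) ereal_mult_right_mono order_trans setdist_e_nonneg)

lemma llx_mono: "lipschitz_like_x F xb pb yb r \<Longrightarrow> r \<le> r' \<Longrightarrow> lipschitz_like_x F xb pb yb r'"
  unfolding lipschitz_like_x_def
  by (smt (verit, best) mult_right_mono norm_ge_zero)

lemma ll_mono: "lipschitz_like G xb yb r \<Longrightarrow> r \<le> r' \<Longrightarrow> lipschitz_like G xb yb r'"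
  unfolding lipschitz_like_def
  by (smt (verit, best) mult_right_mono norm_ge_zero)

lemma above_inf_in:
  fixes P :: "real \<Rightarrow> bool"
  assumes ex: "\<exists>L. P L" and mono: "\<And>a b. P a \<Longrightarrow> a \<le> b \<Longrightarrow> P b" and lb: "\<And>a. P a \<Longrightarrow> 0 \<le> a"
  shows "\<And>t. Inf {L. P L} < t \<Longrightarrow> P t" and "0 \<le> Inf {L. P L}"
proof -
  have ne: "{L. P L} \<noteq> {}" using ex by blast
  show "P t" if lt: "Inf {L. P L} < t" for t
  proof -
    obtain a where "a \<in> {L. P L}" "a < t" using cInf_lessD[OF ne lt] by blast
    thus ?thesis using mono by auto
  qed
  show "0 \<le> Inf {L. P L}" using ne lb by (auto intro: cInf_greatest)
qed

theorem theorem4p12: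
  fixes F :: "'x::banach \<Rightarrow> 'p::banach \<Rightarrow> 'y::banach set"
    and G :: "'x \<Rightarrow> 'y set"
    and xb :: 'x and pb :: 'p and yb :: 'y
  defines "S \<equiv> (\<lambda>p. {x. 0 \<in> {y + z | y z. y \<in> F x p \<and> z \<in> G x}})"
  assumes "yb \<in> F xb pb" and "- yb \<in> G xb"
    and i: "locally_sum_stable F G xb pb yb (- yb)"
    and ii: "\<exists>U. open U \<and> xb \<in> U \<and> (\<forall>x\<in>U. inner_semicontinuous (F x) pb yb)"
    and iii: "\<exists>L. lipschitz_like_x F xb pb yb L"
    and iv: "\<exists>L. metric_regular_p F xb pb yb L"
    and v: "\<exists>L. lipschitz_like G xb (- yb) L"
  shows "(\<exists>L. metric_regular S pb xb L) \<and>
         reg S pb xb \<le> reg_hat_p F xb pb yb * (lip_hat_x F xb pb yb + lip G xb (- yb))"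
proof -
  define R0 where "R0 = reg_hat_p F xb pb yb"
  define A0 where "A0 = lip_hat_x F xb pb yb"
  define B0 where "B0 = lip G xb (- yb)"
  define K where "K = R0*(A0+B0)"
  have lbR: "\<And>a. metric_regular_p F xb pb yb a \<Longrightarrow> 0 \<le> a" by (simp add: metric_regular_p_def)
  note RR = above_inf_in[of "metric_regular_p F xb pb yb", OF iv mrp_mono lbR]
  have R1: "\<And>t. R0 < t \<Longrightarrow> metric_regular_p F xb pb yb t" unfolding R0_def reg_hat_p_def by (rule RR(1))
  have R2: "0 \<le> R0" unfolding R0_def reg_hat_p_def by (rule RR(2))
  have lbA: "\<And>a. lipschitz_like_x F xb pb yb a \<Longrightarrow> 0 \<le> a" by (simp add: lipschitz_like_x_def)
  note AA = above_inf_in[of "lipschitz_like_x F xb pb yb", OF iii llx_mono lbA]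
  have A1: "\<And>t. A0 < t \<Longrightarrow> lipschitz_like_x F xb pb yb t" unfolding A0_def lip_hat_x_def by (rule AA(1))
  have lbB: "\<And>a. lipschitz_like G xb (- yb) a \<Longrightarrow> 0 \<le> a" by (simp add: lipschitz_like_def)
  note BB = above_inf_in[of "lipschitz_like G xb (- yb)", OF v ll_mono lbB]
  have B1: "\<And>t. B0 < t \<Longrightarrow> lipschitz_like G xb (- yb) t" unfolding B0_def lip_def by (rule BB(1))
  have MRS: "metric_regular S pb xb L" if LK: "K < L" for L
  proof -
    have "((\<lambda>\<eta>. (R0+\<eta>)*((A0+\<eta>)+(B0+\<eta>))) \<longlongrightarrow> (R0+0)*((A0+0)+(B0+0))) (at_right 0)"
      by (intro tendsto_intros)
    hence "((\<lambda>\<eta>. (R0+\<eta>)*((A0+\<eta>)+(B0+\<eta>))) \<longlongrightarrow> K) (at_right 0)" by (simp add: K_def)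
    hence "\<forall>\<^sub>F \<eta> in at_right 0. (R0+\<eta>)*((A0+\<eta>)+(B0+\<eta>)) < L" using LK by (rule order_tendstoD(2))
    hence "\<forall>\<^sub>F \<eta> in at_right 0. 0 < \<eta> \<and> (R0+\<eta>)*((A0+\<eta>)+(B0+\<eta>)) < L"
      by (rule eventually_conj[OF eventually_at_right_less[of "0::real"]])
    hence "\<exists>\<eta>. 0 < \<eta> \<and> (R0+\<eta>)*((A0+\<eta>)+(B0+\<eta>)) < L"
      by (rule eventually_happens'[rotated]) simp
    then obtain \<eta> :: real where \<eta>: "0 < \<eta>" "(R0+\<eta>)*((A0+\<eta>)+(B0+\<eta>)) < L" by blast
    have "metric_regular (\<lambda>p. {x. 0 \<in> {y + z | y z. y \<in> F x p \<and> z \<in> G x}}) pb xb L"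
      by (rule main[OF R1 A1 B1 i assms(2,3) \<eta>(2)]) (use \<eta>(1) in simp_all)
    thus ?thesis by (simp add: S_def)
  qed
  have ex: "\<exists>L. metric_regular S pb xb L" using MRS[of "K+1"] by auto
  have "reg S pb xb \<le> K"
  proof (rule field_le_epsilon)
    fix e :: real assume e: "0 < e"
    have "bdd_below {L. metric_regular S pb xb L}"
      by (rule bdd_belowI[of _ 0]) (auto simp: metric_regular_def)
    moreover have "K + e \<in> {L. metric_regular S pb xb L}" using MRS e by simp
    ultimately show "reg S pb xb \<le> K + e" unfolding reg_def by (rule cInf_lower[rotated])
  qed
  thus ?thesis using ex by (simp add: K_def R0_def A0_def B0_def)
qed

end
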